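(* Assume the following statement holds: for every complex sequence $(b_n)_{n\geq 0}$ such that for some integer $l\geq 1$ one has $b_nb_{n+l}=0$ for all $n\geq 0$, if $a_n:=\sum_{k=0}^n(-1)^{n-k}\binom{n}{k}b_k$ satisfies $\lim_{n\to\infty}a_n=0$, then $b_n=0$ for all $n$. Then, for any $\theta>0$: if $\mathcal{P}=\sum_{p,q=0}^\infty a_{p,q}x^py^q\in A^\infty(\mathbb{R}^2_\theta)$ satisfies $\mathcal{P}^2=\mathcal{P}=\mathcal{P}^*$ and there is $k\in\mathbb{N}$ such that $a_{p,q}=0$ for all $(p,q)$ with $|p-q|>k$, then $\mathcal{P}=0$ or $\mathcal{P}=1$.
   Context: $A^\infty(\mathbb{R}^2_\theta)$ is the algebra of formal series $\sum_{p,q\geq 0}a_{p,q}x^py^q$, $a_{p,q}\in\mathbb{C}$, whose coefficient function $(p,q)\mapsto a_{p,q}$ is of Schwartz class on $\mathbb{N}^2$ (for every $r\geq1$ there is $C_r$ with $\sup_{p,q}(1+p^2+q^2)^r|a_{p,q}|<C_r$), where $x,y$ are self-adjoint with $[x,y]=xy-yx=-i\theta$, i.e. $yx=xy+i\theta$; products are computed by reordering into the normal form $x^py^q$ using this relation, and the adjoint is determined by $(a\,x^py^q)^*=\bar a\,y^qx^p$ (then reordered). *)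

theory Defs
  imports Complex_Main
begin

text \<open>Elements of A^infinity(R^2_theta) are represented by their coefficient
  functions a :: nat => nat => complex (a p q is the coefficient of x^p y^q).\<close>

definition schwartz_coeff :: "(nat \<Rightarrow> nat \<Rightarrow> complex) \<Rightarrow> bool" where
  "schwartz_coeff a \<longleftrightarrow>
     (\<forall>r::nat. r \<ge> 1 \<longrightarrow> (\<exists>C::real. \<forall>p q.
        (1 + real p ^ 2 + real q ^ 2) ^ r * cmod (a p q) < C))"

text \<open>Normal ordering: y^q x^r = sum_j j! C(q,j) C(r,j) (i theta)^j x^(r-j) y^(q-j).
  The coefficient of x^m y^n in the product a*b collects all contributions with
  p + r - j = m and q + s - j = n, grouped by the power j of (i theta):
  for fixed m n j this is a finite sum over p <= m, s <= n
  (with q = j + n - s, r = j + m - p).\<close>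

definition moyal_prod_term ::
  "real \<Rightarrow> (nat \<Rightarrow> nat \<Rightarrow> complex) \<Rightarrow> (nat \<Rightarrow> nat \<Rightarrow> complex) \<Rightarrow> nat \<Rightarrow> nat \<Rightarrow> nat \<Rightarrow> complex" where
  "moyal_prod_term \<theta> a b m n j =
     (\<Sum>p\<le>m. \<Sum>s\<le>n. a p (j + n - s) * b (j + m - p) s
        * of_nat (fact j) * of_nat ((j + n - s) choose j) * of_nat ((j + m - p) choose j)
        * (\<i> * of_real \<theta>) ^ j)"

definition moyal_prod_eq ::
  "real \<Rightarrow> (nat \<Rightarrow> nat \<Rightarrow> complex) \<Rightarrow> (nat \<Rightarrow> nat \<Rightarrow> complex) \<Rightarrow> (nat \<Rightarrow> nat \<Rightarrow> complex) \<Rightarrow> bool" where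
  "moyal_prod_eq \<theta> a b c \<longleftrightarrow> (\<forall>m n. (moyal_prod_term \<theta> a b m n) sums (c m n))"

text \<open>Adjoint: (a x^p y^q)^* = conj a y^q x^p, reordered. The coefficient of
  x^m y^n in a^* receives the contribution with p = m + j, q = n + j.\<close>

definition moyal_adj_term ::
  "real \<Rightarrow> (nat \<Rightarrow> nat \<Rightarrow> complex) \<Rightarrow> nat \<Rightarrow> nat \<Rightarrow> nat \<Rightarrow> complex" where
  "moyal_adj_term \<theta> a m n j =
     cnj (a (m + j) (n + j)) * of_nat (fact j) * of_nat ((n + j) choose j)
       * of_nat ((m + j) choose j) * (\<i> * of_real \<theta>) ^ j"

definition moyal_adj_eq ::
  "real \<Rightarrow> (nat \<Rightarrow> nat \<Rightarrow> complex) \<Rightarrow> (nat \<Rightarrow> nat \<Rightarrow> complex) \<Rightarrow> bool" where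
  "moyal_adj_eq \<theta> a c \<longleftrightarrow> (\<forall>m n. (moyal_adj_term \<theta> a m n) sums (c m n))"

definition unit_coeff :: "nat \<Rightarrow> nat \<Rightarrow> complex" where
  "unit_coeff p q = (if p = 0 \<and> q = 0 then 1 else 0)"

end

theory Submission
  imports Defs "HOL-Computational_Algebra.Polynomial"
begin

definition ffn :: "nat \<Rightarrow> nat \<Rightarrow> nat" where "ffn r n = (r choose n) * fact n"

lemma ffn_fact: "n \<le> r \<Longrightarrow> ffn r n * fact (r - n) = fact r"
  using binomial_fact_lemma[of n r] by (simp only: ffn_def mult_ac)

lemma ffn_zero: "r < n \<Longrightarrow> ffn r n = 0"
  by (simp add: ffn_def)

lemma ff_mult: assumes ar: "a \<le> r" shows "ffn r a * ffn (r-a) b = ffn r (a+b)"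
proof (cases "a + b \<le> r")
  case True
  have "ffn r a * ffn (r-a) b * fact (r - a - b) = ffn r a * fact (r - a)"
    using ffn_fact[of b "r-a"] True by (simp add: mult.assoc)
  also have "\<dots> = fact r" using ffn_fact[OF ar] .
  also have "\<dots> = ffn r (a+b) * fact (r - (a+b))" using ffn_fact[OF True] by simp
  finally have "ffn r a * ffn (r-a) b * fact (r - (a+b)) = ffn r (a+b) * fact (r - (a+b))" by simp
  then show ?thesis by simp
next
  case False
  then show ?thesis using ar ffn_zero[of "r-a" b] ffn_zero[of r "a+b"] by auto
qed

lemma ff_vdm: "ffn (x+y) q = (\<Sum>j\<le>q. (q choose j) * ffn x j * ffn y (q-j))"
proof -
  have "ffn (x+y) q = (\<Sum>j\<le>q. (x choose j) * (y choose (q - j))) * fact q"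
    by (simp add: ffn_def vandermonde)
  also have "\<dots> = (\<Sum>j\<le>q. (x choose j) * (y choose (q - j)) * fact q)"
    by (simp add: sum_distrib_right)
  also have "\<dots> = (\<Sum>j\<le>q. (q choose j) * ffn x j * ffn y (q-j))"
  proof (rule sum.cong[OF refl])
    fix j assume "j \<in> {..q}"
    then have eq: "fact q = fact j * fact (q - j) * (q choose j)" using binomial_fact_lemma[of j q] by simp
    show "(x choose j) * (y choose (q - j)) * fact q = (q choose j) * ffn x j * ffn y (q-j)"
      unfolding ffn_def eq by (simp only: mult_ac)
  qed
  finally show ?thesis .
qed

lemma wt:
  assumes "q' \<le> r"
  shows "(\<Sum>j\<le>q. fact j * (q choose j) * (p' choose j) * ffn r (q+q'-j)) = ffn (p'+r-q') q * ffn r q'"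
proof -
  have "ffn (p'+r-q') q * ffn r q' = ffn r q' * ffn (p' + (r-q')) q"
    using assms by (simp add: mult.commute)
  also have "\<dots> = (\<Sum>j\<le>q. ffn r q' * ((q choose j) * ffn p' j * ffn (r-q') (q-j)))"
    by (simp add: ff_vdm sum_distrib_left)
  also have "\<dots> = (\<Sum>j\<le>q. fact j * (q choose j) * (p' choose j) * ffn r (q+q'-j))"
  proof (rule sum.cong[OF refl])
    fix j assume j: "j \<in> {..q}"
    have "ffn r q' * ffn (r-q') (q-j) = ffn r (q' + (q-j))" by (rule ff_mult[OF assms])
    moreover have "q' + (q-j) = q+q'-j" using j by simp
    ultimately have "ffn r q' * ((q choose j) * ffn p' j * ffn (r-q') (q-j)) = (q choose j) * ffn p' j * ffn r (q+q'-j)"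
      by (simp only: mult_ac)
    then show "ffn r q' * ((q choose j) * ffn p' j * ffn (r-q') (q-j)) = fact j * (q choose j) * (p' choose j) * ffn r (q+q'-j)"
      unfolding ffn_def[of p' j] by (simp only: mult_ac)
  qed
  finally show ?thesis by simp
qed

lemma sum5:
  assumes "finite A" "\<And>a. finite (B a)" "\<And>a b. finite (C a b)" "\<And>a b c. finite (D a b c)" "\<And>a b c d. finite (E a b c d)"
  shows "(\<Sum>a\<in>A. \<Sum>b\<in>B a. \<Sum>c\<in>C a b. \<Sum>d\<in>D a b c. \<Sum>e\<in>E a b c d. f a b c d e)
    = (\<Sum>(a,b,c,d,e) \<in> {(a,b,c,d,e). a\<in>A \<and> b\<in>B a \<and> c\<in>C a b \<and> d\<in>D a b c \<and> e\<in>E a b c d}. f a b c d e)"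
proof -
  have S: "{(a,b,c,d,e). a\<in>A \<and> b\<in>B a \<and> c\<in>C a b \<and> d\<in>D a b c \<and> e\<in>E a b c d}
     = Sigma A (\<lambda>a. Sigma (B a) (\<lambda>b. Sigma (C a b) (\<lambda>c. Sigma (D a b c) (\<lambda>d. E a b c d))))"
    by auto
  show ?thesis unfolding S
    by (simp add: sum.Sigma assms finite_SigmaI)
qed
lemma sum4:
  assumes "finite A" "\<And>a. finite (B a)" "\<And>a b. finite (C a b)" "\<And>a b c. finite (D a b c)"
  shows "(\<Sum>a\<in>A. \<Sum>b\<in>B a. \<Sum>c\<in>C a b. \<Sum>d\<in>D a b c. f a b c d)
    = (\<Sum>(a,b,c,d) \<in> {(a,b,c,d). a\<in>A \<and> b\<in>B a \<and> c\<in>C a b \<and> d\<in>D a b c}. f a b c d)"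
proof -
  have S: "{(a,b,c,d). a\<in>A \<and> b\<in>B a \<and> c\<in>C a b \<and> d\<in>D a b c}
     = Sigma A (\<lambda>a. Sigma (B a) (\<lambda>b. Sigma (C a b) (\<lambda>c. D a b c)))"
    by auto
  show ?thesis unfolding S
    by (simp add: sum.Sigma assms finite_SigmaI)
qed

definition Mx :: "complex \<Rightarrow> (nat \<Rightarrow> nat \<Rightarrow> complex) \<Rightarrow> nat \<Rightarrow> nat \<Rightarrow> complex" where
  "Mx w a r t = (\<Sum>p\<le>t. \<Sum>q\<le>r. if p + r = t + q then a p q * w^q * of_nat (ffn r q) else 0)"

definition bandk :: "(nat \<Rightarrow> nat \<Rightarrow> complex) \<Rightarrow> nat \<Rightarrow> bool" where
  "bandk a k \<longleftrightarrow> (\<forall>p q. a p q \<noteq> 0 \<longrightarrow> p \<le> q + k \<and> q \<le> p + k)"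

lemma trunc:
  assumes band: "bandk a k" and prod: "moyal_prod_eq \<theta> a a a" and m: "m + k < J"
  shows "a m n = (\<Sum>j<J. moyal_prod_term \<theta> a a m n j)"
proof -
  have s: "(moyal_prod_term \<theta> a a m n) sums a m n" using prod by (simp add: moyal_prod_eq_def)
  have z: "moyal_prod_term \<theta> a a m n j = 0" if "j \<notin> {..<J}" for j
  proof -
    have "a p (j + n - s) = 0" if "p \<le> m" "s \<le> n" for p s
      using band that \<open>j \<notin> {..<J}\<close> m unfolding bandk_def by force
    then show ?thesis unfolding moyal_prod_term_def by simp
  qed
  have "(moyal_prod_term \<theta> a a m n) sums (\<Sum>j<J. moyal_prod_term \<theta> a a m n j)"
    by (rule sums_finite) (use z in auto)
  then show ?thesis using s sums_unique2 by blast
qed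


lemma lhs_form:
  assumes band: "bandk a k" and prod: "moyal_prod_eq \<theta> a a a" and w: "w = \<i> * complex_of_real \<theta>"
    and J: "t + k < J" and B: "t + r + J \<le> B"
  shows "Mx w a r t = (\<Sum>p<B. \<Sum>q<B. \<Sum>p'<B. \<Sum>q'<B. \<Sum>j<J.
     if j \<le> q \<and> j \<le> p' \<and> q+q' \<le> r+j \<and> p+p' \<le> t+j \<and> p+p'+r = t+q+q'
     then a p q * a p' q' * of_nat (fact j * (q choose j) * (p' choose j)) * w^(q+q') * of_nat (ffn r (q+q'-j)) else 0)"
proof -
  have "Mx w a r t = (\<Sum>m\<le>t. \<Sum>n\<le>r. \<Sum>j<J. \<Sum>p\<le>m. \<Sum>s\<le>n.
     if m + r = t + n then a p (j+n-s) * a (j+m-p) s * of_nat (fact j * ((j+n-s) choose j) * ((j+m-p) choose j)) * w^(j+n) * of_nat (ffn r n) else 0)"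
    unfolding Mx_def
  proof (intro sum.cong refl)
    fix m n assume m: "m \<in> {..t}" and n: "n \<in> {..r}"
    show "(if m + r = t + n then a m n * w ^ n * of_nat (ffn r n) else 0) = (\<Sum>j<J. \<Sum>p\<le>m. \<Sum>s\<le>n.
     if m + r = t + n then a p (j+n-s) * a (j+m-p) s * of_nat (fact j * ((j+n-s) choose j) * ((j+m-p) choose j)) * w^(j+n) * of_nat (ffn r n) else 0)"
    proof (cases "m + r = t + n")
      case True
      have "a m n = (\<Sum>j<J. moyal_prod_term \<theta> a a m n j)"
        by (rule trunc[OF band prod]) (use m J in auto)
      then show ?thesis using True
        by (simp add: moyal_prod_term_def sum_distrib_right sum_distrib_left w power_add mult_ac)
    qed simp
  qed
  also have "\<dots> = (\<Sum>(m,n,j,p,s) \<in> {(m,n,j,p,s). m \<in> {..t} \<and> n \<in> {..r} \<and> j \<in> {..<J} \<and> p \<in> {..m} \<and> s \<in> {..n}}.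
     if m + r = t + n then a p (j+n-s) * a (j+m-p) s * of_nat (fact j * ((j+n-s) choose j) * ((j+m-p) choose j)) * w^(j+n) * of_nat (ffn r n) else 0)"
    by (rule sum5) auto
  also have "\<dots> = (\<Sum>(m,n,j,p,s) \<in> {(m,n,j,p,s). m \<le> t \<and> n \<le> r \<and> j < J \<and> p \<le> m \<and> s \<le> n \<and> m + r = t + n}.
     a p (j+n-s) * a (j+m-p) s * of_nat (fact j * ((j+n-s) choose j) * ((j+m-p) choose j)) * w^(j+n) * of_nat (ffn r n))"
  proof (rule sum.mono_neutral_cong_right)
    show "finite {(m,n,j,p,s). m \<in> {..t} \<and> n \<in> {..r} \<and> j \<in> {..<J} \<and> p \<in> {..m} \<and> s \<in> {..n}}"
      by (rule finite_subset[of _ "{..t} \<times> {..r} \<times> {..<J} \<times> {..t} \<times> {..r}"]) auto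
  qed (auto split: if_splits)
  also have "\<dots> = (\<Sum>(p,q,p',q',j) \<in> {(p,q,p',q',j). j < J \<and> j \<le> q \<and> j \<le> p' \<and> q+q' \<le> r+j \<and> p+p' \<le> t+j \<and> p+p'+r = t+q+q'}.
     a p q * a p' q' * of_nat (fact j * (q choose j) * (p' choose j)) * w^(q+q') * of_nat (ffn r (q+q'-j)))"
    by (rule sum.reindex_bij_witness[of _ "\<lambda>(p,q,p',q',j). (p+p'-j, q+q'-j, j, p, q')" "\<lambda>(m,n,j,p,s). (p, j+n-s, j+m-p, s, j)"])
       auto
  also have "\<dots> = (\<Sum>(p,q,p',q',j) \<in> {(p,q,p',q',j). p \<in> {..<B} \<and> q \<in> {..<B} \<and> p' \<in> {..<B} \<and> q' \<in> {..<B} \<and> j \<in> {..<J}}.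
     if j \<le> q \<and> j \<le> p' \<and> q+q' \<le> r+j \<and> p+p' \<le> t+j \<and> p+p'+r = t+q+q'
     then a p q * a p' q' * of_nat (fact j * (q choose j) * (p' choose j)) * w^(q+q') * of_nat (ffn r (q+q'-j)) else 0)"
    by (rule sum.mono_neutral_cong_left) (use B in \<open>auto split: if_splits\<close>)
  also have "\<dots> = (\<Sum>p<B. \<Sum>q<B. \<Sum>p'<B. \<Sum>q'<B. \<Sum>j<J.
     if j \<le> q \<and> j \<le> p' \<and> q+q' \<le> r+j \<and> p+p' \<le> t+j \<and> p+p'+r = t+q+q'
     then a p q * a p' q' * of_nat (fact j * (q choose j) * (p' choose j)) * w^(q+q') * of_nat (ffn r (q+q'-j)) else 0)"
    by (rule sum5[symmetric]) auto
  finally show ?thesis .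
qed


lemma rhs_form:
  assumes B: "t + r + J \<le> B" "r + k < J"
  shows "(\<Sum>s\<le>r+k. Mx w a s t * Mx w a r s) = (\<Sum>p<B. \<Sum>q<B. \<Sum>p'<B. \<Sum>q'<B.
     if p \<le> t \<and> q' \<le> r \<and> p'+r-q' \<le> r+k \<and> q \<le> p'+r-q' \<and> p + (p'+r-q') = t + q
     then a p q * a p' q' * w^(q+q') * of_nat (ffn (p'+r-q') q * ffn r q') else 0)"
proof -
  have "(\<Sum>s\<le>r+k. Mx w a s t * Mx w a r s) = (\<Sum>s\<le>r+k. \<Sum>p\<le>t. \<Sum>q\<le>s. \<Sum>p'\<le>s. \<Sum>q'\<le>r.
     if p+s=t+q \<and> p'+r=s+q' then a p q * a p' q' * w^(q+q') * of_nat (ffn s q * ffn r q') else 0)"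
  proof (rule sum.cong[OF refl])
    fix s
    show "Mx w a s t * Mx w a r s = (\<Sum>p\<le>t. \<Sum>q\<le>s. \<Sum>p'\<le>s. \<Sum>q'\<le>r.
     if p+s=t+q \<and> p'+r=s+q' then a p q * a p' q' * w^(q+q') * of_nat (ffn s q * ffn r q') else 0)"
      unfolding Mx_def sum_distrib_right unfolding sum_distrib_left
      by (intro sum.cong refl) (simp add: power_add mult_ac)
  qed
  also have "\<dots> = (\<Sum>(s,p,q,p',q') \<in> {(s,p,q,p',q'). s \<in> {..r+k} \<and> p \<in> {..t} \<and> q \<in> {..s} \<and> p' \<in> {..s} \<and> q' \<in> {..r}}.
     if p+s=t+q \<and> p'+r=s+q' then a p q * a p' q' * w^(q+q') * of_nat (ffn s q * ffn r q') else 0)"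
    by (rule sum5) auto
  also have "\<dots> = (\<Sum>(s,p,q,p',q') \<in> {(s,p,q,p',q'). s \<le> r+k \<and> p \<le> t \<and> q \<le> s \<and> p' \<le> s \<and> q' \<le> r \<and> p+s=t+q \<and> p'+r=s+q'}.
     a p q * a p' q' * w^(q+q') * of_nat (ffn s q * ffn r q'))"
  proof (rule sum.mono_neutral_cong_right)
    show "finite {(s,p,q,p',q'). s \<in> {..r+k} \<and> p \<in> {..t} \<and> q \<in> {..s} \<and> p' \<in> {..s} \<and> q' \<in> {..r}}"
      by (rule finite_subset[of _ "{..r+k} \<times> {..t} \<times> {..r+k} \<times> {..r+k} \<times> {..r}"]) auto
  qed (auto split: if_splits)
  also have "\<dots> = (\<Sum>(p,q,p',q') \<in> {(p,q,p',q'). p \<le> t \<and> q' \<le> r \<and> p'+r-q' \<le> r+k \<and> q \<le> p'+r-q' \<and> p + (p'+r-q') = t + q}.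
     a p q * a p' q' * w^(q+q') * of_nat (ffn (p'+r-q') q * ffn r q'))"
    by (rule sum.reindex_bij_witness[of _ "\<lambda>(p,q,p',q'). (p'+r-q', p, q, p', q')" "\<lambda>(s,p,q,p',q'). (p,q,p',q')"])
       auto
  also have "\<dots> = (\<Sum>(p,q,p',q') \<in> {(p,q,p',q'). p \<in> {..<B} \<and> q \<in> {..<B} \<and> p' \<in> {..<B} \<and> q' \<in> {..<B}}.
     if p \<le> t \<and> q' \<le> r \<and> p'+r-q' \<le> r+k \<and> q \<le> p'+r-q' \<and> p + (p'+r-q') = t + q
     then a p q * a p' q' * w^(q+q') * of_nat (ffn (p'+r-q') q * ffn r q') else 0)"
    by (rule sum.mono_neutral_cong_left) (use B in \<open>auto split: if_splits\<close>)
  also have "\<dots> = (\<Sum>p<B. \<Sum>q<B. \<Sum>p'<B. \<Sum>q'<B.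
     if p \<le> t \<and> q' \<le> r \<and> p'+r-q' \<le> r+k \<and> q \<le> p'+r-q' \<and> p + (p'+r-q') = t + q
     then a p q * a p' q' * w^(q+q') * of_nat (ffn (p'+r-q') q * ffn r q') else 0)"
    by (rule sum4[symmetric]) auto
  finally show ?thesis .
qed


lemma pw:
  assumes band: "bandk a k" and J: "t + k < J"
  shows "(\<Sum>j<J. if j \<le> q \<and> j \<le> p' \<and> q+q' \<le> r+j \<and> p+p' \<le> t+j \<and> p+p'+r = t+q+q'
     then a p q * a p' q' * of_nat (fact j * (q choose j) * (p' choose j)) * w^(q+q') * of_nat (ffn r (q+q'-j)) else 0)
   = (if p \<le> t \<and> q' \<le> r \<and> p'+r-q' \<le> r+k \<and> q \<le> p'+r-q' \<and> p + (p'+r-q') = t + q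
     then a p q * a p' q' * w^(q+q') * of_nat (ffn (p'+r-q') q * ffn r q') else 0)"
proof (cases "a p q = 0 \<or> a p' q' = 0")
  case True
  then have z: "a p q * a p' q' = 0" by auto
  have L: "(if j \<le> q \<and> j \<le> p' \<and> q+q' \<le> r+j \<and> p+p' \<le> t+j \<and> p+p'+r = t+q+q'
     then a p q * a p' q' * of_nat (fact j * (q choose j) * (p' choose j)) * w^(q+q') * of_nat (ffn r (q+q'-j)) else 0) = 0" for j
    using z by simp
  have R: "(if p \<le> t \<and> q' \<le> r \<and> p'+r-q' \<le> r+k \<and> q \<le> p'+r-q' \<and> p + (p'+r-q') = t + q
     then a p q * a p' q' * w^(q+q') * of_nat (ffn (p'+r-q') q * ffn r q') else 0) = 0"
    using z by simp
  show ?thesis unfolding R using L by simp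
next
  case False
  then have b1: "p \<le> q + k" "q \<le> p + k" "p' \<le> q' + k" "q' \<le> p' + k"
    using band unfolding bandk_def by auto
  show ?thesis
  proof (cases "p+p'+r = t+q+q' \<and> q' \<le> r \<and> q \<le> p'+r-q'")
    case False
    have L: "(if j \<le> q \<and> j \<le> p' \<and> q+q' \<le> r+j \<and> p+p' \<le> t+j \<and> p+p'+r = t+q+q'
     then a p q * a p' q' * of_nat (fact j * (q choose j) * (p' choose j)) * w^(q+q') * of_nat (ffn r (q+q'-j)) else 0) = 0" for j
      using False by auto
    have R: "\<not> (p \<le> t \<and> q' \<le> r \<and> p'+r-q' \<le> r+k \<and> q \<le> p'+r-q' \<and> p + (p'+r-q') = t + q)"
      using False by auto
    have R': "(if p \<le> t \<and> q' \<le> r \<and> p'+r-q' \<le> r+k \<and> q \<le> p'+r-q' \<and> p + (p'+r-q') = t + q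
     then a p q * a p' q' * w^(q+q') * of_nat (ffn (p'+r-q') q * ffn r q') else 0) = 0"
      using R by (rule if_not_P)
    show ?thesis unfolding R' using L by simp
  next
    case True
    then have D: "p+p'+r = t+q+q'" and q'r: "q' \<le> r" and qs: "q \<le> p'+r-q'" by auto
    have pt: "p \<le> t" using D q'r qs by linarith
    have qJ: "q < J" using pt b1 J by linarith
    have "(\<Sum>j<J. if j \<le> q \<and> j \<le> p' \<and> q+q' \<le> r+j \<and> p+p' \<le> t+j \<and> p+p'+r = t+q+q'
     then a p q * a p' q' * of_nat (fact j * (q choose j) * (p' choose j)) * w^(q+q') * of_nat (ffn r (q+q'-j)) else 0)
      = (\<Sum>j<J. a p q * a p' q' * w^(q+q') * of_nat (fact j * (q choose j) * (p' choose j) * ffn r (q+q'-j)))"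
    proof (rule sum.cong[OF refl])
      fix j
      show "(if j \<le> q \<and> j \<le> p' \<and> q+q' \<le> r+j \<and> p+p' \<le> t+j \<and> p+p'+r = t+q+q'
     then a p q * a p' q' * of_nat (fact j * (q choose j) * (p' choose j)) * w^(q+q') * of_nat (ffn r (q+q'-j)) else 0)
       = a p q * a p' q' * w^(q+q') * of_nat (fact j * (q choose j) * (p' choose j) * ffn r (q+q'-j))"
      proof (cases "j \<le> q \<and> j \<le> p' \<and> q+q' \<le> r+j")
        case True
        then have "p+p' \<le> t+j" using D by linarith
        then show ?thesis using True D by (simp add: mult_ac)
      next
        case False
        have "(q choose j) = 0 \<or> (p' choose j) = 0 \<or> ffn r (q+q'-j) = 0"
        proof (cases "j \<le> q \<and> j \<le> p'")
          case True
          then have "r < q+q'-j" using False by auto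
          then show ?thesis by (simp add: ffn_zero)
        next
          case False
          then show ?thesis by auto
        qed
        then show ?thesis using False by auto
      qed
    qed
    also have "\<dots> = (\<Sum>j\<le>q. a p q * a p' q' * w^(q+q') * of_nat (fact j * (q choose j) * (p' choose j) * ffn r (q+q'-j)))"
      by (rule sum.mono_neutral_cong_right) (use qJ in auto)
    also have "\<dots> = a p q * a p' q' * w^(q+q') * of_nat (\<Sum>j\<le>q. fact j * (q choose j) * (p' choose j) * ffn r (q+q'-j))"
      by (simp add: sum_distrib_left)
    also have "\<dots> = a p q * a p' q' * w^(q+q') * of_nat (ffn (p'+r-q') q * ffn r q')"
      using wt[OF q'r, of q p'] by simp
    finally show ?thesis using pt q'r qs b1 D by auto
  qed
qed


lemma hom:
  assumes band: "bandk a k" and prod: "moyal_prod_eq \<theta> a a a" and w: "w = \<i> * complex_of_real \<theta>"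
  shows "Mx w a r t = (\<Sum>s\<le>r+k. Mx w a s t * Mx w a r s)"
proof -
  define J where "J = t + r + k + 1"
  define B where "B = t + r + J"
  have "Mx w a r t = (\<Sum>p<B. \<Sum>q<B. \<Sum>p'<B. \<Sum>q'<B. \<Sum>j<J.
     if j \<le> q \<and> j \<le> p' \<and> q+q' \<le> r+j \<and> p+p' \<le> t+j \<and> p+p'+r = t+q+q'
     then a p q * a p' q' * of_nat (fact j * (q choose j) * (p' choose j)) * w^(q+q') * of_nat (ffn r (q+q'-j)) else 0)"
    by (rule lhs_form[OF band prod w]) (simp_all add: J_def B_def)
  also have "\<dots> = (\<Sum>p<B. \<Sum>q<B. \<Sum>p'<B. \<Sum>q'<B.
     if p \<le> t \<and> q' \<le> r \<and> p'+r-q' \<le> r+k \<and> q \<le> p'+r-q' \<and> p + (p'+r-q') = t + q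
     then a p q * a p' q' * w^(q+q') * of_nat (ffn (p'+r-q') q * ffn r q') else 0)"
    by (intro sum.cong refl pw[OF band]) (simp add: J_def)
  also have "\<dots> = (\<Sum>s\<le>r+k. Mx w a s t * Mx w a r s)"
    by (rule rhs_form[symmetric, of t r J]) (simp_all add: J_def B_def)
  finally show ?thesis .
qed


lemma Mx_band:
  assumes band: "bandk a k" and "r + k < t \<or> t + k < r"
  shows "Mx w a r t = 0"
proof -
  have "(if p + r = t + q then a p q * w^q * of_nat (ffn r q) else 0) = 0" for p q
  proof (cases "a p q = 0")
    case False
    then have "p \<le> q + k \<and> q \<le> p + k" using band unfolding bandk_def by blast
    then show ?thesis using assms(2) by auto
  qed simp
  then show ?thesis unfolding Mx_def by simp
qed

lemma Mx_diag_pos: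
  "Mx w a r (r + d) = (\<Sum>q\<le>r. a (q+d) q * w^q * of_nat (ffn r q))"
proof -
  have "Mx w a r (r + d) = (\<Sum>q\<le>r. \<Sum>p\<le>r+d. if p = q + d then a p q * w^q * of_nat (ffn r q) else 0)"
    unfolding Mx_def by (subst sum.swap) (intro sum.cong refl, auto)
  also have "\<dots> = (\<Sum>q\<le>r. a (q+d) q * w^q * of_nat (ffn r q))"
    by (intro sum.cong refl) (auto simp: sum.delta')
  finally show ?thesis .
qed

lemma Mx_diag_neg:
  "Mx w a (r + d) r = (\<Sum>p\<le>r. a p (p+d) * w^(p+d) * of_nat (ffn (r+d) (p+d)))"
proof -
  have "Mx w a (r + d) r = (\<Sum>p\<le>r. \<Sum>q\<le>r+d. if q = p + d then a p q * w^q * of_nat (ffn (r+d) q) else 0)"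
    unfolding Mx_def by (intro sum.cong refl) auto
  also have "\<dots> = (\<Sum>p\<le>r. a p (p+d) * w^(p+d) * of_nat (ffn (r+d) (p+d)))"
    by (intro sum.cong refl) (auto simp: sum.delta')
  finally show ?thesis .
qed

lemma adj_lim:
  assumes adj: "moyal_adj_eq \<theta> a a" and th: "\<theta> \<ge> 0"
  shows "(\<lambda>j. norm (a (m+j) (n+j)) * fact j * \<theta>^j) \<longlonglongrightarrow> 0"
proof -
  have "summable (moyal_adj_term \<theta> a m n)" using adj unfolding moyal_adj_eq_def sums_iff by blast
  then have "moyal_adj_term \<theta> a m n \<longlonglongrightarrow> 0" by (rule summable_LIMSEQ_zero)
  then show ?thesis
  proof (rule tendsto_0_le[where K=1])
    show "\<forall>\<^sub>F j in sequentially. norm (norm (a (m+j) (n+j)) * fact j * \<theta>^j) \<le> norm (moyal_adj_term \<theta> a m n j) * 1"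
    proof (rule always_eventually, rule allI)
      fix j
      have c1: "(1::real) \<le> of_nat ((n+j) choose j)" and c2: "(1::real) \<le> of_nat ((m+j) choose j)"
        by (simp_all add: Suc_leI)
      have nn: "0 \<le> norm (a (m+j) (n+j)) * fact j * \<theta>^j" using th by simp
      have "norm (moyal_adj_term \<theta> a m n j) = norm (a (m+j) (n+j)) * fact j * \<theta>^j * (of_nat ((n+j) choose j) * of_nat ((m+j) choose j))"
        unfolding moyal_adj_term_def using th by (simp add: norm_mult norm_power abs_of_nonneg mult_ac)
      also have "\<dots> \<ge> norm (a (m+j) (n+j)) * fact j * \<theta>^j * 1"
      proof (rule mult_left_mono[OF _ nn])
        have "1 * 1 \<le> (of_nat ((n+j) choose j) :: real) * of_nat ((m+j) choose j)"
          by (rule mult_mono[OF c1 c2]) simp_all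
        then show "1 \<le> (of_nat ((n+j) choose j) :: real) * of_nat ((m+j) choose j)" by simp
      qed
      finally show "norm (norm (a (m+j) (n+j)) * fact j * \<theta>^j) \<le> norm (moyal_adj_term \<theta> a m n j) * 1"
        using nn by simp
    qed
  qed
qed

lemma alt_sum_delta:
  "(\<Sum>u\<le>N. (-1::complex)^(N-u) * of_nat (N choose u)) = (if N = 0 then 1 else 0)"
proof -
  have "(1 + (-1::complex))^N = (\<Sum>u\<le>N. of_nat (N choose u) * 1^u * (-1)^(N-u))"
    by (rule binomial_ring)
  then have "(\<Sum>u\<le>N. (-1::complex)^(N-u) * of_nat (N choose u)) = 0^N"
    by (simp add: mult.commute)
  then show ?thesis by (simp add: power_0_left)
qed

lemma binv:
  fixes g b :: "nat \<Rightarrow> complex"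
  assumes "\<And>i. b i = (\<Sum>q\<le>i. of_nat (i choose q) * g q)"
  shows "(\<Sum>i\<le>n. (-1)^(n-i) * of_nat (n choose i) * b i) = g n"
proof -
  have "(\<Sum>i\<le>n. (-1)^(n-i) * of_nat (n choose i) * b i)
      = (\<Sum>i\<le>n. \<Sum>q\<le>n. if q \<le> i then (-1)^(n-i) * of_nat (n choose i) * of_nat (i choose q) * g q else 0)"
    by (rule sum.cong[OF refl]) (auto simp: assms sum_distrib_left mult.assoc split: if_splits intro!: sum.mono_neutral_cong_left)
  also have "\<dots> = (\<Sum>q\<le>n. \<Sum>i\<le>n. if q \<le> i then (-1)^(n-i) * of_nat (n choose i) * of_nat (i choose q) * g q else 0)"
    by (rule sum.swap)
  also have "\<dots> = (\<Sum>q\<le>n. g q * of_nat (n choose q) * (\<Sum>u\<le>n-q. (-1)^(n-q-u) * of_nat ((n-q) choose u)))"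
  proof (rule sum.cong[OF refl])
    fix q assume q: "q \<in> {..n}"
    have "(\<Sum>i\<le>n. if q \<le> i then (-1::complex)^(n-i) * of_nat (n choose i) * of_nat (i choose q) * g q else 0)
       = (\<Sum>i\<in>{q..n}. (-1::complex)^(n-i) * of_nat (n choose i) * of_nat (i choose q) * g q)"
      by (rule sum.mono_neutral_cong_right) auto
    also have "\<dots> = (\<Sum>u\<le>n-q. (-1::complex)^(n-(u+q)) * of_nat (n choose (u+q)) * of_nat ((u+q) choose q) * g q)"
      using q by (intro sum.reindex_bij_witness[of _ "\<lambda>u. u + q" "\<lambda>i. i - q"]) auto
    also have "\<dots> = (\<Sum>u\<le>n-q. g q * of_nat (n choose q) * ((-1)^(n-q-u) * of_nat ((n-q) choose u)))"
    proof (rule sum.cong[OF refl])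
      fix u assume u: "u \<in> {..n-q}"
      have "(n choose (u+q)) * ((u+q) choose q) = (n choose q) * ((n-q) choose u)"
        using choose_mult[of q "u+q" n] u q by auto
      then have "(of_nat (n choose (u+q)) :: complex) * of_nat ((u+q) choose q) = of_nat (n choose q) * of_nat ((n-q) choose u)"
        by (metis of_nat_mult)
      moreover have "n - (u+q) = n - q - u" by simp
      ultimately show "(-1::complex)^(n-(u+q)) * of_nat (n choose (u+q)) * of_nat ((u+q) choose q) * g q = g q * of_nat (n choose q) * ((-1)^(n-q-u) * of_nat ((n-q) choose u))"
        by (simp add: algebra_simps)
    qed
    also have "\<dots> = g q * of_nat (n choose q) * (\<Sum>u\<le>n-q. (-1)^(n-q-u) * of_nat ((n-q) choose u))"
      by (simp add: sum_distrib_left)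
    finally show "(\<Sum>i\<le>n. if q \<le> i then (-1::complex)^(n-i) * of_nat (n choose i) * of_nat (i choose q) * g q else 0) = g q * of_nat (n choose q) * (\<Sum>u\<le>n-q. (-1)^(n-q-u) * of_nat ((n-q) choose u))" .
  qed
  also have "\<dots> = (\<Sum>q\<le>n. if q = n then g q else 0)"
  proof (rule sum.cong[OF refl])
    fix q assume "q \<in> {..n}"
    have "(\<Sum>u\<le>n-q. (-1::complex)^(n-q-u) * of_nat ((n-q) choose u)) = (if n-q = 0 then 1 else 0)"
      by (rule alt_sum_delta)
    then show "g q * of_nat (n choose q) * (\<Sum>u\<le>n-q. (-1)^(n-q-u) * of_nat ((n-q) choose u)) = (if q = n then g q else 0)"
      using \<open>q \<in> {..n}\<close> by auto
  qed
  also have "\<dots> = g n" by simp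
  finally show ?thesis .
qed


definition SHyp :: "bool" where
  "SHyp \<longleftrightarrow> (\<forall>b :: nat \<Rightarrow> complex.
      (\<exists>l::nat. l \<ge> 1 \<and> (\<forall>n. b n * b (n + l) = 0)) \<longrightarrow>
      (\<lambda>n. \<Sum>i\<le>n. (-1) ^ (n - i) * of_nat (n choose i) * b i) \<longlonglongrightarrow> 0 \<longrightarrow>
      (\<forall>n. b n = 0))"

lemma norm_w: "\<theta> > 0 \<Longrightarrow> norm ((\<i> * complex_of_real \<theta>)^j) = \<theta>^j"
  by (simp add: norm_power norm_mult)

lemma top:
  assumes SH: SHyp and th: "\<theta> > 0" and band: "bandk a k" and k: "k > 0"
    and prod: "moyal_prod_eq \<theta> a a a" and adj: "moyal_adj_eq \<theta> a a"
  shows "a (q+k) q = 0"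
proof -
  define w where "w = \<i> * complex_of_real \<theta>"
  define g where "g q = a (q+k) q * w^q * of_nat (fact q)" for q
  define b where "b r = Mx w a r (r+k)" for r
  have bN: "b r = (\<Sum>q\<le>r. of_nat (r choose q) * g q)" for r
    unfolding b_def Mx_diag_pos g_def ffn_def by (intro sum.cong refl) (simp add: mult_ac)
  have T: "(\<Sum>i\<le>n. (-1)^(n-i) * of_nat (n choose i) * b i) = g n" for n by (rule binv[OF bN])
  have prod0: "b n * b (n + k) = 0" for n
  proof -
    have "0 = Mx w a n (n + 2*k)" by (rule Mx_band[OF band, symmetric]) (use k in auto)
    also have "\<dots> = (\<Sum>s\<le>n+k. Mx w a s (n+2*k) * Mx w a n s)" by (rule hom[OF band prod w_def])
    also have "\<dots> = (\<Sum>s\<le>n+k. if s = n+k then Mx w a (n+k) (n+2*k) * Mx w a n (n+k) else 0)"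
    proof (rule sum.cong[OF refl])
      fix s assume s: "s \<in> {..n+k}"
      show "Mx w a s (n+2*k) * Mx w a n s = (if s = n+k then Mx w a (n+k) (n+2*k) * Mx w a n (n+k) else 0)"
      proof (cases "s = n+k")
        case False
        then have "s + k < n + 2*k" using s by auto
        then have "Mx w a s (n+2*k) = 0" by (intro Mx_band[OF band]) auto
        then show ?thesis using False by simp
      qed simp
    qed
    also have "\<dots> = b (n+k) * b n"
    proof -
      have e: "n + 2*k = (n+k)+k" by simp
      show ?thesis unfolding b_def e by simp
    qed
    finally show ?thesis by (simp add: mult.commute)
  qed
  have "(\<lambda>j. norm (a (k+j) (0+j)) * fact j * \<theta>^j) \<longlonglongrightarrow> 0"
    by (rule adj_lim[OF adj]) (use th in simp)
  moreover have "norm (g j) = norm (a (k+j) (0+j)) * fact j * \<theta>^j" for j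
    unfolding g_def w_def using th by (simp add: norm_mult norm_w add.commute)
  ultimately have "(\<lambda>j. norm (g j)) \<longlonglongrightarrow> 0" by simp
  then have glim: "g \<longlonglongrightarrow> 0" by (rule tendsto_norm_zero_cancel)
  have "(\<lambda>n. \<Sum>i\<le>n. (-1)^(n-i) * of_nat (n choose i) * b i) \<longlonglongrightarrow> 0"
    unfolding T using glim .
  moreover have "\<exists>l::nat. l \<ge> 1 \<and> (\<forall>n. b n * b (n + l) = 0)"
    using prod0 k by (intro exI[of _ k]) auto
  ultimately have b0: "\<forall>n. b n = 0" using SH unfolding SHyp_def by blast
  have "g q = 0" using T[of q] b0 by simp
  moreover have "w \<noteq> 0" using th by (simp add: w_def)
  ultimately show ?thesis by (simp add: g_def)
qed


lemma ffn_pos: "n \<le> r \<Longrightarrow> ffn r n \<noteq> 0"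
  by (simp add: ffn_def)

lemma bot:
  assumes SH: SHyp and th: "\<theta> > 0" and band: "bandk a k" and k: "k > 0"
    and prod: "moyal_prod_eq \<theta> a a a" and adj: "moyal_adj_eq \<theta> a a"
  shows "a q (q+k) = 0"
proof -
  define w where "w = \<i> * complex_of_real \<theta>"
  define g where "g q = a q (q+k) * w^(q+k) * of_nat (fact q)" for q
  define b where "b r = (\<Sum>p\<le>r. of_nat (r choose p) * g p)" for r
  have bM: "Mx w a (r+k) r = of_nat (ffn (r+k) k) * b r" for r
  proof -
    have "Mx w a (r+k) r = (\<Sum>p\<le>r. a p (p+k) * w^(p+k) * of_nat (ffn (r+k) (p+k)))"
      by (rule Mx_diag_neg)
    also have "\<dots> = (\<Sum>p\<le>r. of_nat (ffn (r+k) k) * (of_nat (r choose p) * g p))"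
    proof (rule sum.cong[OF refl])
      fix p
      have "ffn (r+k) k * ffn (r+k-k) p = ffn (r+k) (k+p)" by (rule ff_mult) simp
      then have "ffn (r+k) (p+k) = ffn (r+k) k * ((r choose p) * fact p)" by (simp add: ffn_def add.commute)
      then show "a p (p+k) * w^(p+k) * of_nat (ffn (r+k) (p+k)) = of_nat (ffn (r+k) k) * (of_nat (r choose p) * g p)"
        by (simp add: g_def mult_ac)
    qed
    also have "\<dots> = of_nat (ffn (r+k) k) * b r" by (simp add: b_def sum_distrib_left)
    finally show ?thesis .
  qed
  have T: "(\<Sum>i\<le>n. (-1)^(n-i) * of_nat (n choose i) * b i) = g n" for n by (rule binv) (simp add: b_def)
  have prod0: "b n * b (n + k) = 0" for n
  proof -
    have "0 = Mx w a (n + 2*k) n" by (rule Mx_band[OF band, symmetric]) (use k in auto)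
    also have "\<dots> = (\<Sum>s\<le>n+2*k+k. Mx w a s n * Mx w a (n + 2*k) s)" by (rule hom[OF band prod w_def])
    also have "\<dots> = (\<Sum>s\<le>n+2*k+k. if s = n+k then Mx w a (n+k) n * Mx w a (n+2*k) (n+k) else 0)"
    proof (rule sum.cong[OF refl])
      fix s assume s: "s \<in> {..n+2*k+k}"
      show "Mx w a s n * Mx w a (n + 2*k) s = (if s = n+k then Mx w a (n+k) n * Mx w a (n+2*k) (n+k) else 0)"
      proof (cases "s = n+k")
        case False
        show ?thesis
        proof (cases "s < n + k")
          case True
          then have "Mx w a (n + 2*k) s = 0" by (intro Mx_band[OF band]) auto
          then show ?thesis using False by simp
        next
          case False2: False
          then have "Mx w a s n = 0" using False by (intro Mx_band[OF band]) auto
          then show ?thesis using False by simp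
        qed
      qed simp
    qed
    also have "\<dots> = Mx w a (n+k) n * Mx w a (n+2*k) (n+k)" by simp
    also have "\<dots> = of_nat (ffn (n+k) k) * of_nat (ffn (n+k+k) k) * (b n * b (n+k))"
    proof -
      have e: "n + 2*k = (n+k)+k" by simp
      show ?thesis unfolding e bM by (simp add: mult_ac)
    qed
    finally have "of_nat (ffn (n+k) k) * of_nat (ffn (n+k+k) k) * (b n * b (n+k)) = 0" by simp
    moreover have "of_nat (ffn (n+k) k) * of_nat (ffn (n+k+k) k) \<noteq> (0::complex)"
      using ffn_pos[of k "n+k"] ffn_pos[of k "n+k+k"] by simp
    ultimately show ?thesis by simp
  qed
  have "(\<lambda>j. norm (a (0+j) (k+j)) * fact j * \<theta>^j) \<longlonglongrightarrow> 0"
    by (rule adj_lim[OF adj]) (use th in simp)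
  then have "(\<lambda>j. norm (a (0+j) (k+j)) * fact j * \<theta>^j * \<theta>^k) \<longlonglongrightarrow> 0"
    by (rule tendsto_mult_left_zero)
  moreover have "norm (g j) = norm (a (0+j) (k+j)) * fact j * \<theta>^j * \<theta>^k" for j
    unfolding g_def w_def using th by (simp add: norm_mult norm_w add.commute power_add)
  ultimately have "(\<lambda>j. norm (g j)) \<longlonglongrightarrow> 0" by simp
  then have glim: "g \<longlonglongrightarrow> 0" by (rule tendsto_norm_zero_cancel)
  have "(\<lambda>n. \<Sum>i\<le>n. (-1)^(n-i) * of_nat (n choose i) * b i) \<longlonglongrightarrow> 0"
    unfolding T using glim .
  moreover have "\<exists>l::nat. l \<ge> 1 \<and> (\<forall>n. b n * b (n + l) = 0)"
    using prod0 k by (intro exI[of _ k]) auto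
  ultimately have b0: "\<forall>n. b n = 0" using SH unfolding SHyp_def by blast
  have "g q = 0" using T[of q] b0 by simp
  moreover have "w \<noteq> 0" using th by (simp add: w_def)
  ultimately show ?thesis by (simp add: g_def)
qed


lemma band_reduce:
  assumes SH: SHyp and th: "\<theta> > 0"
    and prod: "moyal_prod_eq \<theta> a a a" and adj: "moyal_adj_eq \<theta> a a"
  shows "bandk a k \<Longrightarrow> bandk a 0"
proof (induction k)
  case 0
  then show ?case .
next
  case (Suc k)
  have z1: "a (q + Suc k) q = 0" for q by (rule top[OF SH th Suc.prems _ prod adj]) simp
  have z2: "a q (q + Suc k) = 0" for q by (rule bot[OF SH th Suc.prems _ prod adj]) simp
  have "bandk a k"
    unfolding bandk_def
  proof (intro allI impI)
    fix p q assume nz: "a p q \<noteq> 0"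
    then have b: "p \<le> q + Suc k" "q \<le> p + Suc k" using Suc.prems unfolding bandk_def by auto
    have "p \<noteq> q + Suc k" using nz z1 by auto
    moreover have "q \<noteq> p + Suc k" using nz z2 by auto
    ultimately show "p \<le> q + k \<and> q \<le> p + k" using b by auto
  qed
  then show ?case by (rule Suc.IH)
qed

lemma prod_ff: "(\<Prod>i<q. (of_nat r - of_nat i :: complex)) = of_nat (ffn r q)"
proof -
  have "(of_nat r gchoose q :: complex) = (\<Prod>i=0..<q. of_nat r - of_nat i) / fact q"
    by (simp add: gbinomial_prod_rev)
  then have "(\<Prod>i<q. (of_nat r - of_nat i :: complex)) = (of_nat r gchoose q) * fact q"
    by (simp add: atLeast0LessThan)
  also have "\<dots> = of_nat (ffn r q)"
    by (simp add: ffn_def binomial_gbinomial)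
  finally show ?thesis .
qed

lemma poly_const:
  fixes h c :: "nat \<Rightarrow> complex"
  assumes hN: "\<And>r. h r = (\<Sum>q<N. of_nat (r choose q) * c q)" and h01: "\<And>r. h r = 0 \<or> h r = 1"
  shows "h r = h 0"
proof -
  define P :: "complex poly" where "P = (\<Sum>q<N. smult (c q / fact q) (\<Prod>i<q. [:- of_nat i, 1:]))"
  have Pev: "poly P (of_nat r) = h r" for r
  proof -
    have "poly P (of_nat r) = (\<Sum>q<N. c q / fact q * (\<Prod>i<q. (of_nat r - of_nat i)))"
      unfolding P_def by (simp add: poly_sum poly_prod)
    also have "\<dots> = (\<Sum>q<N. of_nat (r choose q) * c q)"
      by (intro sum.cong refl) (simp add: prod_ff ffn_def)
    finally show ?thesis using hN by simp
  qed
  have "poly (P * (P - 1)) (of_nat r) = 0" for r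
    using h01[of r] by (auto simp: Pev)
  then have sub: "range (of_nat :: nat \<Rightarrow> complex) \<subseteq> {x. poly (P * (P - 1)) x = 0}" by auto
  have "P * (P - 1) = 0"
  proof (rule ccontr)
    assume "P * (P - 1) \<noteq> 0"
    then have "finite {x. poly (P * (P - 1)) x = 0}" by (rule poly_roots_finite)
    then have "finite (range (of_nat :: nat \<Rightarrow> complex))" using sub finite_subset by blast
    moreover have "infinite (range (of_nat :: nat \<Rightarrow> complex))"
      by (rule range_inj_infinite) (simp add: inj_on_def)
    ultimately show False by simp
  qed
  then have "P = 0 \<or> P = 1" by auto
  then have "poly P (of_nat r) = poly P (of_nat 0)" by auto
  then show ?thesis using Pev by (metis of_nat_0)
qed


lemma deg0:
  assumes band: "bandk a 0" and th: "\<theta> > 0"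
    and prod: "moyal_prod_eq \<theta> a a a" and adj: "moyal_adj_eq \<theta> a a"
  shows "a = (\<lambda>p q. 0) \<or> a = unit_coeff"
proof -
  define w where "w = \<i> * complex_of_real \<theta>"
  define g where "g q = a q q * w^q * of_nat (fact q)" for q
  define h where "h r = Mx w a r r" for r
  have hN: "h r = (\<Sum>q\<le>r. of_nat (r choose q) * g q)" for r
    using Mx_diag_pos[of w a r 0] unfolding h_def g_def ffn_def by (simp add: mult_ac)
  have T: "(\<Sum>i\<le>n. (-1)^(n-i) * of_nat (n choose i) * h i) = g n" for n by (rule binv[OF hN])
  have idem: "h r = h r * h r" for r
  proof -
    have "h r = (\<Sum>s\<le>r+0. Mx w a s r * Mx w a r s)" unfolding h_def by (rule hom[OF band prod w_def])
    also have "\<dots> = (\<Sum>s\<le>r. if s = r then h r * h r else 0)"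
    proof (rule sum.cong)
      fix s assume s: "s \<in> {..r}"
      show "Mx w a s r * Mx w a r s = (if s = r then h r * h r else 0)"
      proof (cases "s = r")
        case False
        then have "Mx w a r s = 0" using s by (intro Mx_band[OF band]) auto
        then show ?thesis using False by simp
      qed (simp add: h_def)
    qed simp
    also have "\<dots> = h r * h r" by simp
    finally show ?thesis .
  qed
  have h01: "h r = 0 \<or> h r = 1" for r
  proof -
    have "h r * (h r - 1) = 0" using idem[of r] by (simp add: algebra_simps)
    then show ?thesis by simp
  qed
  have "(\<lambda>j. norm (a (0+j) (0+j)) * fact j * \<theta>^j) \<longlonglongrightarrow> 0"
    by (rule adj_lim[OF adj]) (use th in simp)
  moreover have "norm (g j) = norm (a (0+j) (0+j)) * fact j * \<theta>^j" for j
    unfolding g_def w_def using th by (simp add: norm_mult norm_w)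
  ultimately have "(\<lambda>j. norm (g j)) \<longlonglongrightarrow> 0" by simp
  then obtain N where N: "\<And>n. n \<ge> N \<Longrightarrow> norm (g n) < 1"
    using order_tendstoD(2)[of _ 0 sequentially 1] unfolding eventually_sequentially by force
  define hi where "hi i = (if h i = 1 then 1 else 0 :: int)" for i
  have hhi: "h i = of_int (hi i)" for i using h01[of i] by (auto simp: hi_def)
  have gint: "g n = of_int (\<Sum>i\<le>n. (-1)^(n-i) * int (n choose i) * hi i)" for n
    unfolding T[symmetric] hhi by simp
  have gz: "g n = 0" if "n \<ge> N" for n
  proof -
    have "norm (of_int (\<Sum>i\<le>n. (-1)^(n-i) * int (n choose i) * hi i) :: complex) < 1"
      using N[OF that] gint[of n] by simp
    then have "\<bar>\<Sum>i\<le>n. (-1)^(n-i) * int (n choose i) * hi i\<bar> < 1"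
      by (simp only: norm_of_int)
    then show ?thesis using gint[of n] by simp
  qed
  have hN2: "h r = (\<Sum>q<N. of_nat (r choose q) * g q)" for r
  proof -
    have "h r = (\<Sum>q<N+r+1. of_nat (r choose q) * g q)"
      unfolding hN by (rule sum.mono_neutral_cong_left) auto
    also have "\<dots> = (\<Sum>q<N. of_nat (r choose q) * g q)"
      by (rule sum.mono_neutral_cong_right) (auto simp: gz)
    finally show ?thesis .
  qed
  have hc: "h r = h 0" for r by (rule poly_const[OF hN2 h01])
  define g' :: "nat \<Rightarrow> complex" where "g' q = (if q = 0 then h 0 else 0)" for q
  have T': "(\<Sum>i\<le>n. (-1)^(n-i) * of_nat (n choose i) * h i) = g' n" for n
  proof (rule binv)
    fix i
    have "(\<Sum>q\<le>i. of_nat (i choose q) * g' q) = (\<Sum>q\<le>i. if q = 0 then h 0 else 0)"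
      by (rule sum.cong) (auto simp: g'_def)
    then show "h i = (\<Sum>q\<le>i. of_nat (i choose q) * g' q)"
      using hc[of i] by simp
  qed
  have gg: "g n = g' n" for n using T[of n] T'[of n] by simp
  have wnz: "w \<noteq> 0" using th by (simp add: w_def)
  have diag: "a n n = (if n = 0 then h 0 else 0)" for n
    using gg[of n] wnz by (auto simp: g_def g'_def split: if_splits)
  have off: "a p q = 0" if "p \<noteq> q" for p q
    using band that unfolding bandk_def by force
  show ?thesis
  proof (cases "h 0 = 0")
    case True
    have "a = (\<lambda>p q. 0)"
    proof (intro ext)
      fix p q show "a p q = 0" using diag[of p] off[of p q] True by (cases "p = q") auto
    qed
    then show ?thesis ..
  next
    case False
    then have h1: "h 0 = 1" using h01[of 0] by simp
    have "a = unit_coeff"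
    proof (intro ext)
      fix p q show "a p q = unit_coeff p q" using diag[of p] off[of p q] h1
        by (cases "p = q") (auto simp: unit_coeff_def)
    qed
    then show ?thesis ..
  qed
qed

theorem theorem1p3:
  fixes \<theta> :: real and a :: "nat \<Rightarrow> nat \<Rightarrow> complex" and k :: nat
  assumes seq_hyp: "\<forall>b :: nat \<Rightarrow> complex.
      (\<exists>l::nat. l \<ge> 1 \<and> (\<forall>n. b n * b (n + l) = 0)) \<longrightarrow>
      (\<lambda>n. \<Sum>i\<le>n. (-1) ^ (n - i) * of_nat (n choose i) * b i) \<longlonglongrightarrow> 0 \<longrightarrow>
      (\<forall>n. b n = 0)"
    and "\<theta> > 0"
    and "schwartz_coeff a"
    and "moyal_prod_eq \<theta> a a a"
    and "moyal_adj_eq \<theta> a a"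
    and "\<forall>p q. (if p \<ge> q then p - q else q - p) > k \<longrightarrow> a p q = 0"
  shows "a = (\<lambda>p q. 0) \<or> a = unit_coeff"
proof -
  have SH: SHyp using seq_hyp unfolding SHyp_def .
  have "bandk a k"
    unfolding bandk_def
  proof (intro allI impI)
    fix p q assume "a p q \<noteq> 0"
    then have "\<not> (if p \<ge> q then p - q else q - p) > k" using assms(6) by blast
    then show "p \<le> q + k \<and> q \<le> p + k" by (auto split: if_splits)
  qed
  then have "bandk a 0" by (rule band_reduce[OF SH assms(2) assms(4) assms(5)])
  then show ?thesis by (rule deg0[OF _ assms(2) assms(4) assms(5)])
qed

end
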